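(* In the additive noise ordinal optimisation model (see context), with $n\in\mathbb{N}$, $m\in\{1,\dots,n\}$ and $\alpha\in(0,1)$, $$p^{\mathrm{A}}_{\mathrm{success}}(n,m,\alpha)=1-(1-\alpha)^n-\sum_{g=1}^{n-m}\binom{n}{g}\alpha^g(1-\alpha)^{n-g}\int_{-\infty}^{\infty}F_{Z_{\{g+m\}}}(z)\,f_{Z_{\{1\}},g}(z)\,dz,$$ where $$F_{Z_{\{g+m\}}}(z)=\sum_{j=0}^{n-g-m}\binom{n-g}{j}\big[1-F_{\overline Z}(z)\big]^j\big[F_{\overline Z}(z)\big]^{n-g-j},\qquad F_{\overline Z}(z)=\int_{x^*_\alpha}^{\infty}F_Y(z-x)f_{\overline X}(x)\,dx,$$ $$f_{\overline X}(x)=\begin{cases}f_X(x)/(1-\alpha),& x\ge x^*_\alpha\\ 0,& x<x^*_\alpha\end{cases},$$ and $$f_{Z_{\{1\}},g}(z)=g\big[1-F_{\underline Z}(z)\big]^{g-1}f_{\underline Z}(z),\quad F_{\underline Z}(z)=\int_{-\infty}^{x^*_\alpha}F_Y(z-x)f_{\underline X}(x)\,dx,\quad f_{\underline Z}(z)=\int_{-\infty}^{x^*_\alpha}f_Y(z-x)f_{\underline X}(x)\,dx,$$ $$f_{\underline X}(x)=\begin{cases}f_X(x)/\alpha,& x\le x^*_\alpha\\ 0,& x>x^*_\alpha\end{cases}.$$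
   Context: Ordinal optimisation model: let $(Z_1,X_1),\dots,(Z_n,X_n)$ be i.i.d. copies of a pair $(Z,X)$ of real random variables. Order $Z_1,\dots,Z_n$ increasingly as $Z_{1:n}\le\dots\le Z_{n:n}$ and, for $i=1,\dots,m$, let $X_{\langle i\rangle}$ denote the $X$-value paired with $Z_{i:n}$. Let $x^*_\alpha$ be the $\alpha$-quantile of $X$, i.e. $F_X(x^*_\alpha)=\alpha$. The success probability is $p_{\mathrm{success}}(n,m,\alpha)=\Pr(\min_{1\le i\le m}X_{\langle i\rangle}\le x^*_\alpha)$. Additive noise model: $Z_i=X_i+Y_i$ with $X_i,Y_i$ independent continuous random variables, $X_i$ having PDF $f_X$ and CDF $F_X$, $Y_i$ having PDF $f_Y$ and CDF $F_Y$ (i.i.d. over $i$); the success probability is then denoted $p^{\mathrm{A}}_{\mathrm{success}}(n,m,\alpha)$. *)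

theory Defs
  imports "HOL-Probability.Probability"
begin

text \<open>Ordinal optimisation: the m designs with the smallest observed values Z are selected.
  The rank of design i is the number of designs with strictly smaller Z; since the Z's are
  continuous they are almost surely distinct, so the designs with rank < m are exactly those
  paired with Z_{1:n},...,Z_{m:n}.\<close>

definition ord_rank :: "nat \<Rightarrow> (nat \<Rightarrow> real) \<Rightarrow> nat \<Rightarrow> nat" where
  "ord_rank n z i = card {j. j < n \<and> z j < z i}"

definition ord_success :: "nat \<Rightarrow> nat \<Rightarrow> real \<Rightarrow> (nat \<Rightarrow> real) \<Rightarrow> (nat \<Rightarrow> real) \<Rightarrow> bool" where
  "ord_success n m xs z x \<longleftrightarrow> (\<exists>i<n. ord_rank n z i < m \<and> x i \<le> xs)"

definition f_Xbar :: "(real \<Rightarrow> real) \<Rightarrow> real \<Rightarrow> real \<Rightarrow> real \<Rightarrow> real" where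
  "f_Xbar fX \<alpha> xs x = (if x \<ge> xs then fX x / (1 - \<alpha>) else 0)"

definition f_Xund :: "(real \<Rightarrow> real) \<Rightarrow> real \<Rightarrow> real \<Rightarrow> real \<Rightarrow> real" where
  "f_Xund fX \<alpha> xs x = (if x \<le> xs then fX x / \<alpha> else 0)"

definition F_Zbar :: "(real \<Rightarrow> real) \<Rightarrow> (real \<Rightarrow> real) \<Rightarrow> real \<Rightarrow> real \<Rightarrow> real \<Rightarrow> real" where
  "F_Zbar fX FY \<alpha> xs z = (LINT x:{xs..}|lborel. FY (z - x) * f_Xbar fX \<alpha> xs x)"

definition F_Zund :: "(real \<Rightarrow> real) \<Rightarrow> (real \<Rightarrow> real) \<Rightarrow> real \<Rightarrow> real \<Rightarrow> real \<Rightarrow> real" where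
  "F_Zund fX FY \<alpha> xs z = (LINT x:{..xs}|lborel. FY (z - x) * f_Xund fX \<alpha> xs x)"

definition f_Zund :: "(real \<Rightarrow> real) \<Rightarrow> (real \<Rightarrow> real) \<Rightarrow> real \<Rightarrow> real \<Rightarrow> real \<Rightarrow> real" where
  "f_Zund fX fY \<alpha> xs z = (LINT x:{..xs}|lborel. fY (z - x) * f_Xund fX \<alpha> xs x)"

text \<open>CDF of the (g+m)-th smallest / density of the minimum, as in the paper.\<close>

definition F_Z_gm :: "nat \<Rightarrow> nat \<Rightarrow> nat \<Rightarrow> (real \<Rightarrow> real) \<Rightarrow> (real \<Rightarrow> real) \<Rightarrow> real \<Rightarrow> real \<Rightarrow> real \<Rightarrow> real" where
  "F_Z_gm n m g fX FY \<alpha> xs z =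
     (\<Sum>j=0..n-g-m. real ((n - g) choose j) * (1 - F_Zbar fX FY \<alpha> xs z) ^ j
                      * (F_Zbar fX FY \<alpha> xs z) ^ (n - g - j))"

definition f_Z1_g :: "nat \<Rightarrow> (real \<Rightarrow> real) \<Rightarrow> (real \<Rightarrow> real) \<Rightarrow> (real \<Rightarrow> real) \<Rightarrow> real \<Rightarrow> real \<Rightarrow> real \<Rightarrow> real" where
  "f_Z1_g g fX fY FY \<alpha> xs z =
     real g * (1 - F_Zund fX FY \<alpha> xs z) ^ (g - 1) * f_Zund fX fY \<alpha> xs z"

end

theory Submission
  imports Defs
begin



locale ordm = prob_space M for M :: "'a measure" +
  fixes X Y :: "nat \<Rightarrow> 'a \<Rightarrow> real" and fX fY FY :: "real \<Rightarrow> real" and n m :: nat and \<alpha> xs :: real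
  assumes m1: "1 \<le> m" and mn: "m \<le> n" and a0: "0 < \<alpha>" and a1: "\<alpha> < 1"
  and ind: "indep_vars (\<lambda>_. borel) (case_sum X Y) (Inl ` {..<n} \<union> Inr ` {..<n})"
  and fXm[measurable]: "fX \<in> borel_measurable borel" and fX0: "\<And>x. 0 \<le> fX x"
  and fYm[measurable]: "fY \<in> borel_measurable borel" and fY0: "\<And>y. 0 \<le> fY y"
  and dX: "\<And>i. i < n \<Longrightarrow> distributed M lborel (X i) (\<lambda>x. ennreal (fX x))"
  and dY: "\<And>i. i < n \<Longrightarrow> distributed M lborel (Y i) (\<lambda>y. ennreal (fY y))"
  and FYd: "\<And>i z. i < n \<Longrightarrow> FY z = measure M {\<omega> \<in> space M. Y i \<omega> \<le> z}"
  and Xa: "\<And>i. i < n \<Longrightarrow> measure M {\<omega> \<in> space M. X i \<omega> \<le> xs} = \<alpha>"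
begin

definition V :: "nat \<Rightarrow> 'a \<Rightarrow> real \<times> real" where "V i \<omega> = (X i \<omega>, Y i \<omega>)"

abbreviation "MP \<equiv> (lborel \<Otimes>\<^sub>M lborel :: (real \<times> real) measure)"

lemma n0: "0 < n" using m1 mn by simp

lemma Xm[measurable]: "i < n \<Longrightarrow> X i \<in> borel_measurable M"
  using distributed_measurable[OF dX] by (simp add: measurable_lborel2)
lemma Ym[measurable]: "i < n \<Longrightarrow> Y i \<in> borel_measurable M"
  using distributed_measurable[OF dY] by (simp add: measurable_lborel2)

lemma Vm[measurable]: "i < n \<Longrightarrow> V i \<in> measurable M MP"
  unfolding V_def by (intro measurable_Pair) (auto simp: measurable_lborel2)

lemma indep_XY: assumes i: "i < n" shows "indep_var lborel (X i) lborel (Y i)"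
proof -
  have "indep_var (Pi\<^sub>M {Inl i} (\<lambda>_. borel)) (\<lambda>\<omega>. restrict (\<lambda>j. case_sum X Y j \<omega>) {Inl i})
      (Pi\<^sub>M {Inr i} (\<lambda>_. borel)) (\<lambda>\<omega>. restrict (\<lambda>j. case_sum X Y j \<omega>) {Inr i})"
    by (rule indep_var_restrict[OF ind]) (use i in auto)
  then have "indep_var lborel ((\<lambda>f. f (Inl i)) \<circ> (\<lambda>\<omega>. restrict (\<lambda>j. case_sum X Y j \<omega>) {Inl i}))
      lborel ((\<lambda>f. f (Inr i)) \<circ> (\<lambda>\<omega>. restrict (\<lambda>j. case_sum X Y j \<omega>) {Inr i}))"
    by (rule indep_var_compose) (auto simp: measurable_lborel1 intro!: measurable_component_singleton)
  moreover have "((\<lambda>f. f (Inl i)) \<circ> (\<lambda>\<omega>. restrict (\<lambda>j. case_sum X Y j \<omega>) {Inl i})) = X i"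
     "((\<lambda>f. f (Inr i)) \<circ> (\<lambda>\<omega>. restrict (\<lambda>j. case_sum X Y j \<omega>) {Inr i})) = Y i" by auto
  ultimately show ?thesis by simp
qed

lemma distV: assumes i: "i < n"
  shows "distributed M MP (V i) (\<lambda>(x,y). ennreal (fX x) * ennreal (fY y))"
  unfolding V_def
  by (rule distributed_joint_indep[OF _ _ dX[OF i] dY[OF i] indep_XY[OF i]]) (auto intro: lborel.sigma_finite_measure_axioms)

lemma indepV: "indep_vars (\<lambda>_. MP) V {..<n}"
proof -
  have "indep_vars (\<lambda>j. Pi\<^sub>M ((\<lambda>i. {Inl i, Inr i}) j) (\<lambda>_. borel))
       (\<lambda>j \<omega>. restrict (\<lambda>i. case_sum X Y i \<omega>) ((\<lambda>i. {Inl i, Inr i}) j)) {..<n}"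
    by (rule indep_vars_restrict[OF ind]) (auto simp: disjoint_family_on_def)
  then have "indep_vars (\<lambda>_. MP) (\<lambda>j x. (\<lambda>f. (f (Inl j), f (Inr j)))
       ((\<lambda>j \<omega>. restrict (\<lambda>i. case_sum X Y i \<omega>) ((\<lambda>i. {Inl i, Inr i}) j)) j x)) {..<n}"
    by (rule indep_vars_compose2) (auto simp: measurable_lborel1 intro!: measurable_Pair measurable_component_singleton)
  then show ?thesis by (simp add: V_def[abs_def])
qed

end



context ordm begin

lemma X0m[measurable]: "X 0 \<in> borel_measurable M" using Xm[OF n0] .
lemma Y0m[measurable]: "Y 0 \<in> borel_measurable M" using Ym[OF n0] .

lemma emV: assumes i: "i < n" and A: "A \<in> sets MP"
  shows "emeasure M (V i -` A \<inter> space M) =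
     (\<integral>\<^sup>+x. \<integral>\<^sup>+y. ennreal (fX x) * ennreal (fY y) * indicator A (x,y) \<partial>lborel \<partial>lborel)"
proof -
  have "emeasure M (V i -` A \<inter> space M) = (\<integral>\<^sup>+p. (\<lambda>(x,y). ennreal (fX x) * ennreal (fY y)) p * indicator A p \<partial>MP)"
    by (rule distributed_emeasure[OF distV[OF i] A])
  also have "\<dots> = (\<integral>\<^sup>+x. \<integral>\<^sup>+y. ennreal (fX x) * ennreal (fY y) * indicator A (x,y) \<partial>lborel \<partial>lborel)"
    by (subst lborel.nn_integral_fst[symmetric]) (use A in auto)
  finally show ?thesis .
qed

lemma int_fY: "(\<integral>\<^sup>+y. ennreal (fY y) * indicator A y \<partial>lborel) = emeasure M (Y 0 -` A \<inter> space M)"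
  if "A \<in> sets borel" for A
  using distributed_emeasure[OF dY[OF n0], of A] that by simp

lemma int_fX: "(\<integral>\<^sup>+y. ennreal (fX y) * indicator A y \<partial>lborel) = emeasure M (X 0 -` A \<inter> space M)"
  if "A \<in> sets borel" for A
  using distributed_emeasure[OF dX[OF n0], of A] that by simp

lemma FY_le: "(\<integral>\<^sup>+y. ennreal (fY y) * indicator {..t} y \<partial>lborel) = ennreal (FY t)"
proof -
  have "(\<integral>\<^sup>+y. ennreal (fY y) * indicator {..t} y \<partial>lborel) = emeasure M (Y 0 -` {..t} \<inter> space M)"
    by (rule int_fY) auto
  also have "Y 0 -` {..t} \<inter> space M = {\<omega> \<in> space M. Y 0 \<omega> \<le> t}" by auto
  also have "emeasure M \<dots> = ennreal (FY t)" using FYd[OF n0, of t]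
    by (simp add: emeasure_eq_measure)
  finally show ?thesis .
qed

lemma fY_single: "(\<integral>\<^sup>+y. ennreal (fY y) * indicator {c} y \<partial>lborel) = 0"
  by (rule nn_integral_zero') (use AE_lborel_singleton[of c] in \<open>auto elim!: eventually_mono\<close>)

lemma fX_single: "(\<integral>\<^sup>+y. ennreal (fX y) * indicator {c} y \<partial>lborel) = 0"
  by (rule nn_integral_zero') (use AE_lborel_singleton[of c] in \<open>auto elim!: eventually_mono\<close>)

lemma FY_mono: "mono FY"
proof
  fix s t :: real assume "s \<le> t"
  then show "FY s \<le> FY t" unfolding FYd[OF n0]
    by (intro finite_measure_mono) (auto, measurable)
qed

lemma FYm[measurable]: "FY \<in> borel_measurable borel"
  using FY_mono by (rule borel_measurable_mono)

lemma FY01: "0 \<le> FY t" "FY t \<le> 1"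
  unfolding FYd[OF n0] by auto

lemma fX_one: "(\<integral>\<^sup>+y. ennreal (fX y) \<partial>lborel) = 1"
  using int_fX[of UNIV] by (simp add: emeasure_space_1)

lemma fY_one: "(\<integral>\<^sup>+y. ennreal (fY y) \<partial>lborel) = 1"
  using int_fY[of UNIV] by (simp add: emeasure_space_1)

lemma fX_int: "integrable lborel fX"
  using fX_one fX0 by (intro integrableI_nn_integral_finite[where x=1]) auto

lemma fY_int: "integrable lborel fY"
  using fY_one fY0 by (intro integrableI_nn_integral_finite[where x=1]) auto

end



context ordm begin

lemma setsMP: "Measurable.pred MP (\<lambda>p. P (fst p) (snd p)) \<Longrightarrow> {(x,y). P x y} \<in> sets MP"
  unfolding pred_def by (simp add: space_pair_measure case_prod_beta')

abbreviation "Fu \<equiv> F_Zund fX FY \<alpha> xs"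
abbreviation "Fb \<equiv> F_Zbar fX FY \<alpha> xs"
abbreviation "fu \<equiv> f_Zund fX fY \<alpha> xs"

lemma Fu_alt: "\<alpha> * Fu z = (\<integral>x. indicator {..xs} x * (fX x * FY (z - x)) \<partial>lborel)"
proof -
  have "\<alpha> * Fu z = (\<integral>x. \<alpha> * (indicator {..xs} x *\<^sub>R (FY (z - x) * f_Xund fX \<alpha> xs x)) \<partial>lborel)"
    unfolding F_Zund_def set_lebesgue_integral_def by simp
  also have "\<dots> = (\<integral>x. indicator {..xs} x * (fX x * FY (z - x)) \<partial>lborel)"
    using a0 by (intro Bochner_Integration.integral_cong) (auto simp: f_Xund_def indicator_def)
  finally show ?thesis .
qed

lemma Fb_alt: "(1 - \<alpha>) * Fb z = (\<integral>x. indicator {xs<..} x * (fX x * FY (z - x)) \<partial>lborel)"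
proof -
  have "(1 - \<alpha>) * Fb z = (\<integral>x. (1 - \<alpha>) * (indicator {xs..} x *\<^sub>R (FY (z - x) * f_Xbar fX \<alpha> xs x)) \<partial>lborel)"
    unfolding F_Zbar_def set_lebesgue_integral_def by simp
  also have "\<dots> = (\<integral>x. indicator {xs<..} x * (fX x * FY (z - x)) \<partial>lborel)"
    using a1 AE_lborel_singleton[of xs]
    by (intro integral_cong_AE) (auto simp: f_Xbar_def indicator_def elim!: eventually_mono)
  finally show ?thesis .
qed

lemma int_bdd: assumes [measurable]: "g \<in> borel_measurable borel" and "\<And>x. 0 \<le> g x" "\<And>x. g x \<le> 1"
  shows "integrable lborel (\<lambda>x. g x * fX x)"
  by (rule Bochner_Integration.integrable_bound[OF fX_int]) (use assms fX0 in \<open>auto intro!: mult_left_le_one_le\<close>)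

lemma lowZ: assumes i: "i < n" and C[measurable]: "C \<in> sets borel"
  shows "emeasure M (V i -` {(x,y). x \<in> C \<and> x+y \<le> z} \<inter> space M)
     = ennreal (\<integral>x. indicator C x * (fX x * FY (z - x)) \<partial>lborel)"
proof -
  have "emeasure M (V i -` {(x,y). x \<in> C \<and> x+y \<le> z} \<inter> space M) =
     (\<integral>\<^sup>+x. \<integral>\<^sup>+y. ennreal (fX x) * ennreal (fY y) * indicator {(x,y). x \<in> C \<and> x+y \<le> z} (x,y) \<partial>lborel \<partial>lborel)"
    by (rule emV[OF i], rule setsMP) measurable
  also have "\<dots> = (\<integral>\<^sup>+x. ennreal (fX x) * indicator C x * (\<integral>\<^sup>+y. ennreal (fY y) * indicator {..z-x} y \<partial>lborel) \<partial>lborel)"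
    by (subst nn_integral_cmult[symmetric]) (auto intro!: nn_integral_cong simp: indicator_def algebra_simps)
  also have "\<dots> = (\<integral>\<^sup>+x. ennreal (indicator C x * (fX x * FY (z - x))) \<partial>lborel)"
    by (intro nn_integral_cong) (auto simp: FY_le ennreal_mult' fX0 FY01 split: split_indicator)
  also have "\<dots> = ennreal (\<integral>x. indicator C x * (fX x * FY (z - x)) \<partial>lborel)"
  proof (rule nn_integral_eq_integral)
    have "integrable lborel (\<lambda>x. (indicator C x * FY (z - x)) * fX x)"
      by (rule int_bdd) (auto simp: indicator_def FY01)
    then show "integrable lborel (\<lambda>x. indicator C x * (fX x * FY (z - x)))"
      by (simp add: algebra_simps)
  qed (auto simp: fX0 FY01)
  finally show ?thesis .
qed

lemma good_le: "i < n \<Longrightarrow> emeasure M (V i -` {(x,y). x \<in> {..xs} \<and> x+y \<le> z} \<inter> space M) = ennreal (\<alpha> * Fu z)"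
  by (subst lowZ) (auto simp: Fu_alt)

lemma bad_le: "i < n \<Longrightarrow> emeasure M (V i -` {(x,y). x \<in> {xs<..} \<and> x+y \<le> z} \<inter> space M) = ennreal ((1 - \<alpha>) * Fb z)"
  by (subst lowZ) (auto simp: Fb_alt)

lemma Zeq0: assumes i: "i < n"
  shows "emeasure M (V i -` {(x,y). x+y = z} \<inter> space M) = 0"
proof -
  have "emeasure M (V i -` {(x,y). x+y = z} \<inter> space M) =
     (\<integral>\<^sup>+x. \<integral>\<^sup>+y. ennreal (fX x) * ennreal (fY y) * indicator {(x,y). x+y = z} (x,y) \<partial>lborel \<partial>lborel)"
    by (rule emV[OF i], rule setsMP) measurable
  also have "\<dots> = (\<integral>\<^sup>+x. ennreal (fX x) * (\<integral>\<^sup>+y. ennreal (fY y) * indicator {z-x} y \<partial>lborel) \<partial>lborel)"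
    by (subst nn_integral_cmult[symmetric]) (auto intro!: nn_integral_cong simp: indicator_def algebra_simps)
  also have "\<dots> = 0" by (simp add: fY_single)
  finally show ?thesis .
qed

lemma Xle: "i < n \<Longrightarrow> emeasure M (V i -` {(x,y). x \<le> xs} \<inter> space M) = ennreal \<alpha>"
proof -
  assume i: "i < n"
  have "V i -` {(x,y). x \<le> xs} \<inter> space M = {\<omega> \<in> space M. X i \<omega> \<le> xs}" by (auto simp: V_def)
  then show ?thesis using Xa[OF i] by (simp add: emeasure_eq_measure)
qed

lemma Xgt: "i < n \<Longrightarrow> emeasure M (V i -` {(x,y). xs < x} \<inter> space M) = ennreal (1 - \<alpha>)"
proof -
  assume i: "i < n"
  have "V i -` {(x,y). xs < x} \<inter> space M = space M - {\<omega> \<in> space M. X i \<omega> \<le> xs}" by (auto simp: V_def)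
  then show ?thesis using Xa[OF i] Xm[OF i] by (simp add: emeasure_eq_measure prob_compl)
qed

end



context ordm begin

lemma meas_of: "emeasure M A = ennreal r \<Longrightarrow> 0 \<le> r \<Longrightarrow> measure M A = r"
  by (simp add: measure_def)

lemma Fu_nn: "0 \<le> \<alpha> * Fu z" unfolding Fu_alt
  by (rule integral_nonneg_AE) (auto simp: fX0 FY01)
lemma Fb_nn: "0 \<le> (1 - \<alpha>) * Fb z" unfolding Fb_alt
  by (rule integral_nonneg_AE) (auto simp: fX0 FY01)

lemma Vev[measurable]: "i < n \<Longrightarrow> Measurable.pred MP (\<lambda>p. P (fst p) (snd p)) \<Longrightarrow> V i -` {(x,y). P x y} \<inter> space M \<in> events"
  using Vm setsMP by (blast intro: measurable_sets)

lemma mgood_le: "i < n \<Longrightarrow> measure M (V i -` {(x,y). x \<le> xs \<and> x+y \<le> z} \<inter> space M) = \<alpha> * Fu z"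
  using good_le[of i z] Fu_nn by (intro meas_of) auto
lemma mbad_le: "i < n \<Longrightarrow> measure M (V i -` {(x,y). xs < x \<and> x+y \<le> z} \<inter> space M) = (1 - \<alpha>) * Fb z"
  using bad_le[of i z] Fb_nn by (intro meas_of) auto
lemma mZeq: "i < n \<Longrightarrow> measure M (V i -` {(x,y). x+y = z} \<inter> space M) = 0"
  using Zeq0[of i z] by (intro meas_of) auto
lemma mXle: "i < n \<Longrightarrow> measure M (V i -` {(x,y). x \<le> xs} \<inter> space M) = \<alpha>"
  using Xle[of i] a0 by (intro meas_of) auto
lemma mXgt: "i < n \<Longrightarrow> measure M (V i -` {(x,y). xs < x} \<inter> space M) = 1 - \<alpha>"
  using Xgt[of i] a1 by (intro meas_of) auto

definition "pv i A = measure M (V i -` A \<inter> space M)"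

lemma pv_diff: assumes i: "i < n" and [measurable]: "A \<in> sets MP" "B \<in> sets MP"
  shows "pv i (A - B) = pv i A - pv i (A \<inter> B)"
proof -
  have e: "V i -` (A - B) \<inter> space M = (V i -` A \<inter> space M) - (V i -` B \<inter> space M)"
     "V i -` (A \<inter> B) \<inter> space M = (V i -` A \<inter> space M) \<inter> (V i -` B \<inter> space M)" by auto
  show ?thesis unfolding pv_def e
    by (rule finite_measure_Diff') (use i in measurable)
qed

lemma pv_union: assumes i: "i < n" and [measurable]: "A \<in> sets MP" "B \<in> sets MP" and d: "A \<inter> B = {}"
  shows "pv i (A \<union> B) = pv i A + pv i B"
proof -
  have e: "V i -` (A \<union> B) \<inter> space M = (V i -` A \<inter> space M) \<union> (V i -` B \<inter> space M)" by auto
  show ?thesis unfolding pv_def e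
    by (rule finite_measure_Union) (use i d in \<open>measurable, auto\<close>)
qed

lemma pv_mono: assumes i: "i < n" and [measurable]: "B \<in> sets MP" and "A \<subseteq> B"
  shows "pv i A \<le> pv i B"
  unfolding pv_def using assms by (intro finite_measure_mono) (auto, measurable)

lemma pv_null: assumes i: "i < n" and A: "A \<subseteq> {(x,y). x + y = z}"
  shows "pv i A = 0"
proof -
  have "pv i A \<le> pv i {(x,y). x + y = z}"
    by (rule pv_mono[OF i _ A], rule setsMP) measurable
  then show ?thesis using mZeq[OF i, of z] by (simp add: pv_def) (metis measure_nonneg order_antisym)
qed

definition "SG z = {(x,y). x \<le> xs \<and> z < x+y}"
definition "WG z = {(x,y). x \<le> xs \<and> z \<le> x+y}"
definition "SB z = {(x,y). xs < x \<and> x+y < z}"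
definition "WB z = {(x,y). xs < x \<and> z \<le> x+y}"

lemma sets_SG[measurable]: "SG z \<in> sets MP" unfolding SG_def by (rule setsMP) measurable
lemma sets_WG[measurable]: "WG z \<in> sets MP" unfolding WG_def by (rule setsMP) measurable
lemma sets_SB[measurable]: "SB z \<in> sets MP" unfolding SB_def by (rule setsMP) measurable
lemma sets_WB[measurable]: "WB z \<in> sets MP" unfolding WB_def by (rule setsMP) measurable
lemmas sets_SGB = sets_SG sets_WG sets_SB sets_WB

lemma s1a[measurable]: "{(x,y). x \<le> xs} \<in> sets MP" by (rule setsMP) measurable
lemma s1b[measurable]: "{(x,y). xs < x} \<in> sets MP" by (rule setsMP) measurable
lemma s1c[measurable]: "{(x,y). x \<le> xs \<and> x+y \<le> z} \<in> sets MP" by (rule setsMP) measurable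
lemma s1d[measurable]: "{(x,y). xs < x \<and> x+y \<le> z} \<in> sets MP" by (rule setsMP) measurable

lemma s1e[measurable]: "{(x,y). x \<le> xs \<and> x+y = z} \<in> sets MP" by (rule setsMP) measurable
lemma s1f[measurable]: "{(x,y). xs < x \<and> x+y = z} \<in> sets MP" by (rule setsMP) measurable
lemma pv1: "i < n \<Longrightarrow> pv i {(x,y). x \<le> xs} = \<alpha>" unfolding pv_def by (rule mXle)
lemma pv2: "i < n \<Longrightarrow> pv i {(x,y). xs < x} = 1 - \<alpha>" unfolding pv_def by (rule mXgt)
lemma pv3: "i < n \<Longrightarrow> pv i {(x,y). x \<le> xs \<and> x+y \<le> z} = \<alpha> * Fu z" unfolding pv_def by (rule mgood_le)
lemma pv4: "i < n \<Longrightarrow> pv i {(x,y). xs < x \<and> x+y \<le> z} = (1 - \<alpha>) * Fb z" unfolding pv_def by (rule mbad_le)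

lemma pSG: assumes i: "i < n" shows "pv i (SG z) = \<alpha> * (1 - Fu z)"
proof -
  have "SG z = {(x,y). x \<le> xs} - {(x,y). x \<le> xs \<and> x+y \<le> z}" by (auto simp: SG_def)
  moreover have "{(x,y). x \<le> xs} \<inter> {(x,y). x \<le> xs \<and> x+y \<le> z} = {(x,y). x \<le> xs \<and> x+y \<le> z}" by auto
  ultimately have "pv i (SG z) = \<alpha> - \<alpha> * Fu z"
    using i by (simp add: pv_diff[OF i s1a s1c] pv1 pv3)
  then show ?thesis by (simp add: algebra_simps)
qed

lemma pSB: assumes i: "i < n" shows "pv i (SB z) = (1 - \<alpha>) * Fb z"
proof -
  have "SB z = {(x,y). xs < x \<and> x+y \<le> z} - {(x,y). xs < x \<and> x+y = z}" by (auto simp: SB_def)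
  moreover have "{(x,y). xs < x \<and> x+y \<le> z} \<inter> {(x,y). xs < x \<and> x+y = z} = {(x,y). xs < x \<and> x+y = z}" by auto
  moreover have "pv i {(x,y). xs < x \<and> x+y = z} = 0" by (rule pv_null[OF i, of _ z]) auto
  ultimately show ?thesis
    using i by (simp add: pv_diff[OF i s1d s1f] pv4)
qed

lemma pWG: assumes i: "i < n" shows "pv i (WG z) = \<alpha> * (1 - Fu z)"
proof -
  have "WG z = SG z \<union> {(x,y). x \<le> xs \<and> x+y = z}" by (auto simp: SG_def WG_def)
  moreover have "SG z \<inter> {(x,y). x \<le> xs \<and> x+y = z} = {}" by (auto simp: SG_def)
  moreover have "pv i {(x,y). x \<le> xs \<and> x+y = z} = 0" by (rule pv_null[OF i, of _ z]) auto
  ultimately show ?thesis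
    using i by (simp add: pv_union[OF i sets_SGB(1) s1e] pSG)
qed

lemma pWB: assumes i: "i < n" shows "pv i (WB z) = (1 - \<alpha>) * (1 - Fb z)"
proof -
  have "WB z = {(x,y). xs < x} - SB z" by (auto simp: SB_def WB_def)
  moreover have "{(x,y). xs < x} \<inter> SB z = SB z" by (auto simp: SB_def)
  ultimately have "pv i (WB z) = (1 - \<alpha>) - (1 - \<alpha>) * Fb z"
    using i by (simp add: pv_diff[OF i s1b sets_SGB(3)] pv2 pSB)
  then show ?thesis by (simp add: algebra_simps)
qed

end



context ordm begin

lemma shiftI: fixes f :: "real \<Rightarrow> ennreal" assumes [measurable]: "f \<in> borel_measurable borel"
  shows "(\<integral>\<^sup>+y. f y \<partial>lborel) = (\<integral>\<^sup>+z. f (z - x) \<partial>lborel)"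
  using nn_integral_real_affine[OF assms, of 1 "-x"] by simp

lemma fX_le: "(\<integral>\<^sup>+x. indicator {..xs} x * ennreal (fX x) \<partial>lborel) = ennreal \<alpha>"
proof -
  have "(\<integral>\<^sup>+x. indicator {..xs} x * ennreal (fX x) \<partial>lborel) = emeasure M (X 0 -` {..xs} \<inter> space M)"
    by (subst int_fX[symmetric]) (auto simp: mult.commute)
  also have "X 0 -` {..xs} \<inter> space M = {\<omega> \<in> space M. X 0 \<omega> \<le> xs}" by auto
  finally show ?thesis using Xa[OF n0] by (simp add: emeasure_eq_measure)
qed

lemma alpha_fu: "\<alpha> * fu z = (\<integral>x. indicator {..xs} x * (fX x * fY (z - x)) \<partial>lborel)"
proof -
  have "\<alpha> * fu z = (\<integral>x. \<alpha> * (indicator {..xs} x *\<^sub>R (fY (z - x) * f_Xund fX \<alpha> xs x)) \<partial>lborel)"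
    unfolding f_Zund_def set_lebesgue_integral_def by simp
  also have "\<dots> = (\<integral>x. indicator {..xs} x * (fX x * fY (z - x)) \<partial>lborel)"
    using a0 by (intro Bochner_Integration.integral_cong) (auto simp: f_Xund_def indicator_def)
  finally show ?thesis .
qed

lemma h_total: "(\<integral>\<^sup>+z. \<integral>\<^sup>+x. ennreal (indicator {..xs} x * (fX x * fY (z - x))) \<partial>lborel \<partial>lborel) = ennreal \<alpha>"
proof -
  have "(\<integral>\<^sup>+z. \<integral>\<^sup>+x. ennreal (indicator {..xs} x * (fX x * fY (z - x))) \<partial>lborel \<partial>lborel)
     = (\<integral>\<^sup>+x. \<integral>\<^sup>+z. ennreal (indicator {..xs} x * (fX x * fY (z - x))) \<partial>lborel \<partial>lborel)"
    by (rule pair_sigma_finite.Fubini') (unfold_locales, measurable)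
  also have "\<dots> = (\<integral>\<^sup>+x. indicator {..xs} x * ennreal (fX x) * (\<integral>\<^sup>+z. ennreal (fY (z - x)) \<partial>lborel) \<partial>lborel)"
    by (intro nn_integral_cong, subst nn_integral_cmult[symmetric])
       (auto intro!: nn_integral_cong simp: ennreal_mult' fX0 fY0 split: split_indicator)
  also have "\<dots> = (\<integral>\<^sup>+x. indicator {..xs} x * ennreal (fX x) \<partial>lborel)"
    using shiftI[of "\<lambda>y. ennreal (fY y)"] by (simp add: fY_one)
  finally show ?thesis by (simp add: fX_le)
qed

lemma AE_fu: "AE z in lborel. (\<integral>\<^sup>+x. ennreal (indicator {..xs} x * (fX x * fY (z - x))) \<partial>lborel) = ennreal (\<alpha> * fu z)"
proof -
  have "AE z in lborel. (\<integral>\<^sup>+x. ennreal (indicator {..xs} x * (fX x * fY (z - x))) \<partial>lborel) \<noteq> \<infinity>"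
    by (rule nn_integral_PInf_AE) (use h_total in auto)
  then show ?thesis
  proof (rule eventually_mono)
    fix z assume fin: "(\<integral>\<^sup>+x. ennreal (indicator {..xs} x * (fX x * fY (z - x))) \<partial>lborel) \<noteq> \<infinity>"
    have int: "integrable lborel (\<lambda>x. indicator {..xs} x * (fX x * fY (z - x)))"
      using fin by (intro integrableI_nonneg) (auto simp: fX0 fY0 top.not_eq_extremum)
    show "(\<integral>\<^sup>+x. ennreal (indicator {..xs} x * (fX x * fY (z - x))) \<partial>lborel) = ennreal (\<alpha> * fu z)"
      unfolding alpha_fu by (rule nn_integral_eq_integral[OF int]) (auto simp: fX0 fY0)
  qed
qed

lemma fu_int: "integrable lborel (\<lambda>z. \<alpha> * fu z)"
proof -
  have "(\<integral>\<^sup>+z. ennreal (\<alpha> * fu z) \<partial>lborel) = ennreal \<alpha>"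
  proof -
    have "(\<integral>\<^sup>+z. ennreal (\<alpha> * fu z) \<partial>lborel) = (\<integral>\<^sup>+z. \<integral>\<^sup>+x. ennreal (indicator {..xs} x * (fX x * fY (z - x))) \<partial>lborel \<partial>lborel)"
      by (rule nn_integral_cong_AE) (use AE_fu in \<open>auto elim: eventually_mono\<close>)
    then show ?thesis using h_total by simp
  qed
  moreover have nn: "AE z in lborel. 0 \<le> \<alpha> * fu z"
    unfolding alpha_fu by (auto intro!: integral_nonneg_AE simp: fX0 fY0)
  moreover have "(\<lambda>z. \<alpha> * fu z) \<in> borel_measurable lborel"
    unfolding f_Zund_def set_lebesgue_integral_def f_Xund_def by measurable
  ultimately show ?thesis by (intro integrableI_nn_integral_finite) auto
qed

end



context ordm begin

lemma conv_int: assumes i: "i < n" and Qm[measurable]: "Q \<in> borel_measurable borel"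
  and Q0: "\<And>z. 0 \<le> Q z" and Q1: "\<And>z. Q z \<le> 1"
  shows "(\<integral>\<^sup>+u. indicator {(x,y). x \<le> xs} u * ennreal (Q (fst u + snd u)) \<partial>distr M MP (V i))
       = ennreal (\<integral>z. Q z * (\<alpha> * fu z) \<partial>lborel)"
proof -
  have "(\<integral>\<^sup>+u. indicator {(x,y). x \<le> xs} u * ennreal (Q (fst u + snd u)) \<partial>distr M MP (V i))
     = (\<integral>\<^sup>+u. indicator {(x,y). x \<le> xs} u * ennreal (Q (fst u + snd u)) \<partial>density MP (\<lambda>(x,y). ennreal (fX x) * ennreal (fY y)))"
    by (simp add: distributed_distr_eq_density[OF distV[OF i]])
  also have "\<dots> = (\<integral>\<^sup>+u. (\<lambda>(x,y). ennreal (fX x) * ennreal (fY y)) u * (indicator {(x,y). x \<le> xs} u * ennreal (Q (fst u + snd u))) \<partial>MP)"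
    apply (rule nn_integral_density)
    subgoal by measurable
    subgoal by measurable
    done
  also have "\<dots> = (\<integral>\<^sup>+x. \<integral>\<^sup>+y. ennreal (indicator {..xs} x * fX x * fY y * Q (x + y)) \<partial>lborel \<partial>lborel)"
    by (subst lborel.nn_integral_fst[symmetric])
       (auto intro!: nn_integral_cong simp: ennreal_mult' fX0 fY0 Q0 split: split_indicator, measurable)
  also have "\<dots> = (\<integral>\<^sup>+x. \<integral>\<^sup>+z. ennreal (indicator {..xs} x * fX x * fY (z - x) * Q z) \<partial>lborel \<partial>lborel)"
  proof (rule nn_integral_cong)
    fix x :: real assume "x \<in> space lborel"
    show "(\<integral>\<^sup>+y. ennreal (indicator {..xs} x * fX x * fY y * Q (x + y)) \<partial>lborel) =
          (\<integral>\<^sup>+z. ennreal (indicator {..xs} x * fX x * fY (z - x) * Q z) \<partial>lborel)"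
      using shiftI[of "\<lambda>y. ennreal (indicator {..xs} x * fX x * fY y * Q (x + y))" x] by simp
  qed
  also have "\<dots> = (\<integral>\<^sup>+z. \<integral>\<^sup>+x. ennreal (indicator {..xs} x * fX x * fY (z - x) * Q z) \<partial>lborel \<partial>lborel)"
    by (rule pair_sigma_finite.Fubini'[symmetric]) (unfold_locales, measurable)
  also have "\<dots> = (\<integral>\<^sup>+z. ennreal (Q z) * (\<integral>\<^sup>+x. ennreal (indicator {..xs} x * (fX x * fY (z - x))) \<partial>lborel) \<partial>lborel)"
    by (intro nn_integral_cong, subst nn_integral_cmult[symmetric])
       (auto intro!: nn_integral_cong simp: ennreal_mult'[symmetric] fX0 fY0 Q0 mult_ac)
  also have "\<dots> = (\<integral>\<^sup>+z. ennreal (Q z * (\<alpha> * fu z)) \<partial>lborel)"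
  proof (rule nn_integral_cong_AE)
    show "AE z in lborel. ennreal (Q z) * (\<integral>\<^sup>+x. ennreal (indicator {..xs} x * (fX x * fY (z - x))) \<partial>lborel)
            = ennreal (Q z * (\<alpha> * fu z))"
      using AE_fu by eventually_elim (auto simp: ennreal_mult' Q0)
  qed
  also have "\<dots> = ennreal (\<integral>z. Q z * (\<alpha> * fu z) \<partial>lborel)"
  proof (rule nn_integral_eq_integral)
    show "integrable lborel (\<lambda>z. Q z * (\<alpha> * fu z))"
    proof (rule Bochner_Integration.integrable_bound[OF fu_int])
      show "(\<lambda>z. Q z * (\<alpha> * fu z)) \<in> borel_measurable lborel"
        unfolding f_Zund_def set_lebesgue_integral_def f_Xund_def by measurable
      have "AE z in lborel. 0 \<le> \<alpha> * fu z"
        unfolding alpha_fu by (auto intro!: integral_nonneg_AE simp: fX0 fY0)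
      then show "AE z in lborel. norm (Q z * (\<alpha> * fu z)) \<le> norm (\<alpha> * fu z)"
        by eventually_elim (auto simp: abs_mult Q0 intro!: mult_left_le_one_le Q1)
    qed
    have "AE z in lborel. 0 \<le> \<alpha> * fu z"
      unfolding alpha_fu by (auto intro!: integral_nonneg_AE simp: fX0 fY0)
    then show "AE z in lborel. 0 \<le> Q z * (\<alpha> * fu z)"
      by eventually_elim (auto simp: Q0)
  qed
  finally show ?thesis .
qed

end



lemma sum_subsets_card: assumes R: "finite R"
  shows "(\<Sum>T \<in> {T. T \<subseteq> R \<and> P (card T)}. h (card T)) = (\<Sum>k \<in> {k. k \<le> card R \<and> P k}. real (card R choose k) * h k)"
proof -
  have "(\<Sum>T \<in> {T. T \<subseteq> R \<and> P (card T)}. h (card T)) =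
     (\<Sum>k \<in> {k. k \<le> card R \<and> P k}. \<Sum>T \<in> {T. T \<in> {T. T \<subseteq> R \<and> P (card T)} \<and> card T = k}. h (card T))"
    by (rule sum.group[symmetric]) (use R in \<open>auto intro: card_mono\<close>)
  also have "\<dots> = (\<Sum>k \<in> {k. k \<le> card R \<and> P k}. real (card R choose k) * h k)"
  proof (rule sum.cong)
    fix k assume k: "k \<in> {k. k \<le> card R \<and> P k}"
    have "{T. T \<in> {T. T \<subseteq> R \<and> P (card T)} \<and> card T = k} = {T. T \<subseteq> R \<and> card T = k}"
      using k by auto
    then show "(\<Sum>T \<in> {T. T \<in> {T. T \<subseteq> R \<and> P (card T)} \<and> card T = k}. h (card T)) = real (card R choose k) * h k"
      using n_subsets[OF R, of k] by simp
  qed simp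
  finally show ?thesis .
qed

lemma FZ_expand: fixes a c :: real assumes "m \<le> r"
  shows "(\<Sum>k \<in> {k. k \<le> r \<and> m \<le> k}. real (r choose k) * ((c * a) ^ k * (c * (1 - a)) ^ (r - k)))
       = c ^ r * (\<Sum>j=0..r-m. real (r choose j) * (1 - a) ^ j * a ^ (r - j))"
proof -
  have "(\<Sum>j=0..r-m. real (r choose j) * (1 - a) ^ j * a ^ (r - j)) =
        (\<Sum>k \<in> {k. k \<le> r \<and> m \<le> k}. real (r choose k) * (a ^ k * (1 - a) ^ (r - k)))"
  proof (rule sum.reindex_bij_witness[where j="\<lambda>j. r - j" and i="\<lambda>k. r - k"])
    fix j assume j: "j \<in> {0..r-m}"
    then show "real (r choose (r - j)) * (a ^ (r - j) * (1 - a) ^ (r - (r - j))) = real (r choose j) * (1 - a) ^ j * a ^ (r - j)"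
      using assms binomial_symmetric[of j r] by auto
  qed (use assms in auto)
  moreover have "(\<Sum>k \<in> {k. k \<le> r \<and> m \<le> k}. real (r choose k) * ((c * a) ^ k * (c * (1 - a)) ^ (r - k)))
     = c ^ r * (\<Sum>k \<in> {k. k \<le> r \<and> m \<le> k}. real (r choose k) * (a ^ k * (1 - a) ^ (r - k)))"
    unfolding sum_distrib_left
  proof (rule sum.cong)
    fix k assume "k \<in> {k. k \<le> r \<and> m \<le> k}"
    then have "c ^ r = c ^ k * c ^ (r - k)" by (simp add: power_add[symmetric])
    then show "real (r choose k) * ((c * a) ^ k * (c * (1 - a)) ^ (r - k)) = c ^ r * (real (r choose k) * (a ^ k * (1 - a) ^ (r - k)))"
      by (simp add: power_mult_distrib)
  qed simp
  ultimately show ?thesis by simp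
qed




context ordm begin

definition "Ev S i z = {\<omega> \<in> space M. (\<forall>k \<in> {..<n} - {i}. (k \<in> S \<and> k < i \<longrightarrow> V k \<omega> \<in> SG z) \<and>
    (k \<in> S \<and> i < k \<longrightarrow> V k \<omega> \<in> WG z) \<and> (k \<notin> S \<longrightarrow> xs < X k \<omega>)) \<and>
    m \<le> card {j \<in> {..<n} - S. X j \<omega> + Y j \<omega> < z}}"

definition "AT S i z T k = (if k \<in> S then (if k < i then SG z else WG z) else if k \<in> T then SB z else WB z)"

lemma AT_sets[measurable]: "AT S i z T k \<in> sets MP"
  unfolding AT_def by (cases "k \<in> S"; cases "k < i"; cases "k \<in> T") (simp_all only: if_True if_False sets_SGB)

lemma AT_sets'[simp]: "AT S i z T k \<in> sets (borel \<Otimes>\<^sub>M borel)"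
  using AT_sets[of S i z T k] by simp

lemma probEv: assumes S: "S \<subseteq> {..<n}" "i \<in> S" and mr: "m \<le> n - card S"
  shows "prob (Ev S i z) = (\<alpha> * (1 - Fu z)) ^ (card S - 1) * ((1 - \<alpha>) ^ (n - card S) * F_Z_gm n m (card S) fX FY \<alpha> xs z)"
proof -
  define R where "R = {..<n} - S"
  define rest where "rest = {..<n} - {i}"
  define Tset where "Tset = {T. T \<subseteq> R \<and> m \<le> card T}"
  define g where "g = card S"
  define r where "r = n - g"
  have fR: "finite R" and frest: "finite rest" by (auto simp: R_def rest_def)
  have cR: "card R = r" unfolding R_def r_def g_def using S by (simp add: card_Diff_subset finite_subset)
  have Rrest: "R \<subseteq> rest" using S by (auto simp: R_def rest_def)
  have rest_ne: "rest \<noteq> {}"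
  proof
    assume "rest = {}" then have "R = {}" using Rrest by auto
    then show False using cR mr m1 by (simp add: r_def g_def)
  qed
  have E: "Ev S i z = (\<Union>T\<in>Tset. \<Inter>k\<in>rest. V k -` AT S i z T k \<inter> space M)"
  proof (intro equalityI subsetI)
    fix \<omega> assume w: "\<omega> \<in> Ev S i z"
    let ?T = "{j \<in> R. X j \<omega> + Y j \<omega> < z}"
    have "?T \<in> Tset" using w by (auto simp: Tset_def Ev_def R_def)
    moreover have "\<forall>k\<in>rest. \<omega> \<in> V k -` AT S i z ?T k \<inter> space M"
    proof
      fix k assume k: "k \<in> rest"
      show "\<omega> \<in> V k -` AT S i z ?T k \<inter> space M"
        using w k Rrest by (auto simp: Ev_def AT_def rest_def R_def SB_def WB_def V_def not_less)
    qed
    ultimately show "\<omega> \<in> (\<Union>T\<in>Tset. \<Inter>k\<in>rest. V k -` AT S i z T k \<inter> space M)" by blast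
  next
    fix \<omega> assume "\<omega> \<in> (\<Union>T\<in>Tset. \<Inter>k\<in>rest. V k -` AT S i z T k \<inter> space M)"
    then obtain T where T: "T \<in> Tset" and w: "\<And>k. k \<in> rest \<Longrightarrow> V k \<omega> \<in> AT S i z T k" and sp: "\<omega> \<in> space M"
      using rest_ne by blast
    have "T = {j \<in> R. X j \<omega> + Y j \<omega> < z}"
    proof (intro equalityI subsetI)
      fix j assume j: "j \<in> T"
      then have "j \<in> R" using T by (auto simp: Tset_def)
      then show "j \<in> {j \<in> R. X j \<omega> + Y j \<omega> < z}" using w[of j] Rrest j by (auto simp: AT_def R_def SB_def V_def)
    next
      fix j assume j: "j \<in> {j \<in> R. X j \<omega> + Y j \<omega> < z}"
      then show "j \<in> T" using w[of j] Rrest by (auto simp: AT_def R_def WB_def V_def split: if_splits)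
    qed
    then have "m \<le> card {j \<in> {..<n} - S. X j \<omega> + Y j \<omega> < z}" using T by (simp add: Tset_def R_def)
    moreover have "\<forall>k \<in> {..<n} - {i}. (k \<in> S \<and> k < i \<longrightarrow> V k \<omega> \<in> SG z) \<and>
        (k \<in> S \<and> i < k \<longrightarrow> V k \<omega> \<in> WG z) \<and> (k \<notin> S \<longrightarrow> xs < X k \<omega>)"
    proof (intro ballI conjI impI)
      fix k assume k: "k \<in> {..<n} - {i}"
      then have kr: "k \<in> rest" by (simp add: rest_def)
      show "k \<in> S \<and> k < i \<Longrightarrow> V k \<omega> \<in> SG z" using w[OF kr] by (simp add: AT_def)
      show "k \<in> S \<and> i < k \<Longrightarrow> V k \<omega> \<in> WG z" using w[OF kr] by (simp add: AT_def)
      show "k \<notin> S \<Longrightarrow> xs < X k \<omega>" using w[OF kr] by (auto simp: AT_def SB_def WB_def V_def split: if_splits)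
    qed
    ultimately show "\<omega> \<in> Ev S i z" using sp by (simp add: Ev_def)
  qed
  have "prob (Ev S i z) = (\<Sum>T\<in>Tset. prob (\<Inter>k\<in>rest. V k -` AT S i z T k \<inter> space M))"
    unfolding E
  proof (rule finite_measure_finite_Union)
    show "finite Tset" unfolding Tset_def using fR by auto
    show "(\<lambda>T. \<Inter>k\<in>rest. V k -` AT S i z T k \<inter> space M) ` Tset \<subseteq> events"
      using rest_ne frest by (auto intro!: sets.finite_INT measurable_sets[OF Vm] simp: rest_def)
    show "disjoint_family_on (\<lambda>T. \<Inter>k\<in>rest. V k -` AT S i z T k \<inter> space M) Tset"
      unfolding disjoint_family_on_def
    proof (intro ballI impI)
      fix T1 T2 assume T1: "T1 \<in> Tset" and T2: "T2 \<in> Tset" and ne: "T1 \<noteq> T2"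
      then obtain j where j: "j \<in> R" "(j \<in> T1) \<noteq> (j \<in> T2)" by (auto simp: Tset_def)
      then have jr: "j \<in> rest" "j \<notin> S" using Rrest by (auto simp: R_def)
      show "(\<Inter>k\<in>rest. V k -` AT S i z T1 k \<inter> space M) \<inter> (\<Inter>k\<in>rest. V k -` AT S i z T2 k \<inter> space M) = {}"
      proof (safe)
        fix \<omega> assume a: "\<omega> \<in> (\<Inter>k\<in>rest. V k -` AT S i z T1 k \<inter> space M)" "\<omega> \<in> (\<Inter>k\<in>rest. V k -` AT S i z T2 k \<inter> space M)"
        then have "V j \<omega> \<in> AT S i z T1 j" "V j \<omega> \<in> AT S i z T2 j" using jr by blast+
        then show "\<omega> \<in> {}" using j jr by (auto simp: AT_def SB_def WB_def split: if_splits)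
      qed
    qed
  qed
  also have "\<dots> = (\<Sum>T\<in>Tset. \<Prod>k\<in>rest. pv k (AT S i z T k))"
    unfolding pv_def
    by (intro sum.cong refl indep_varsD_finite[OF indep_vars_subset[OF indepV]]) (use rest_ne frest in \<open>auto simp: rest_def\<close>)
  also have "\<dots> = (\<Sum>T\<in>Tset. (\<alpha> * (1 - Fu z)) ^ (g - 1) * (((1 - \<alpha>) * Fb z) ^ card T * ((1 - \<alpha>) * (1 - Fb z)) ^ (r - card T)))"
  proof (rule sum.cong[OF refl])
    fix T assume T: "T \<in> Tset"
    then have TR: "T \<subseteq> R" by (simp add: Tset_def)
    have split: "rest = (S - {i}) \<union> (T \<union> (R - T))" using S TR by (auto simp: rest_def R_def)
    have d: "(S - {i}) \<inter> (T \<union> (R - T)) = {}" "T \<inter> (R - T) = {}" using TR by (auto simp: R_def)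
    have fS: "finite S" using S finite_subset by auto
    have fT: "finite T" using TR fR finite_subset by auto
    have p1: "(\<Prod>k\<in>S - {i}. pv k (AT S i z T k)) = (\<alpha> * (1 - Fu z)) ^ (g - 1)"
    proof -
      have "(\<Prod>k\<in>S - {i}. pv k (AT S i z T k)) = (\<Prod>k\<in>S - {i}. \<alpha> * (1 - Fu z))"
        using S by (intro prod.cong) (auto simp: AT_def pSG pWG)
      then show ?thesis using S fS by (simp add: g_def card_Diff_singleton)
    qed
    have p2: "(\<Prod>k\<in>T. pv k (AT S i z T k)) = ((1 - \<alpha>) * Fb z) ^ card T"
    proof -
      have "(\<Prod>k\<in>T. pv k (AT S i z T k)) = (\<Prod>k\<in>T. (1 - \<alpha>) * Fb z)"
        using TR by (intro prod.cong) (auto simp: AT_def pSB R_def)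
      then show ?thesis by simp
    qed
    have p3: "(\<Prod>k\<in>R - T. pv k (AT S i z T k)) = ((1 - \<alpha>) * (1 - Fb z)) ^ (r - card T)"
    proof -
      have "(\<Prod>k\<in>R - T. pv k (AT S i z T k)) = (\<Prod>k\<in>R - T. (1 - \<alpha>) * (1 - Fb z))"
        by (intro prod.cong) (auto simp: AT_def pWB R_def)
      then show ?thesis using TR fR fT cR by (simp add: card_Diff_subset)
    qed
    show "(\<Prod>k\<in>rest. pv k (AT S i z T k)) = (\<alpha> * (1 - Fu z)) ^ (g - 1) * (((1 - \<alpha>) * Fb z) ^ card T * ((1 - \<alpha>) * (1 - Fb z)) ^ (r - card T))"
    proof -
      have fD: "finite (S - {i})" "finite (R - T)" using fS fR by auto
      have "(\<Prod>k\<in>rest. pv k (AT S i z T k)) = (\<Prod>k\<in>S - {i}. pv k (AT S i z T k)) * (\<Prod>k\<in>T \<union> (R - T). pv k (AT S i z T k))"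
        unfolding split by (rule prod.union_disjoint[OF fD(1) _ d(1)]) (use fT fD in auto)
      also have "(\<Prod>k\<in>T \<union> (R - T). pv k (AT S i z T k)) = (\<Prod>k\<in>T. pv k (AT S i z T k)) * (\<Prod>k\<in>R - T. pv k (AT S i z T k))"
        by (rule prod.union_disjoint[OF fT fD(2) d(2)])
      finally show ?thesis by (simp add: p1 p2 p3)
    qed
  qed
  also have "\<dots> = (\<alpha> * (1 - Fu z)) ^ (g - 1) * (\<Sum>T\<in>Tset. ((1 - \<alpha>) * Fb z) ^ card T * ((1 - \<alpha>) * (1 - Fb z)) ^ (r - card T))"
    by (simp add: sum_distrib_left)
  also have "(\<Sum>T\<in>Tset. ((1 - \<alpha>) * Fb z) ^ card T * ((1 - \<alpha>) * (1 - Fb z)) ^ (r - card T)) =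
      (\<Sum>k \<in> {k. k \<le> r \<and> m \<le> k}. real (r choose k) * (((1 - \<alpha>) * Fb z) ^ k * ((1 - \<alpha>) * (1 - Fb z)) ^ (r - k)))"
    unfolding Tset_def using sum_subsets_card[OF fR, where P="\<lambda>k. m \<le> k" and h="\<lambda>k. ((1 - \<alpha>) * Fb z) ^ k * ((1 - \<alpha>) * (1 - Fb z)) ^ (r - k)"]
    by (simp add: cR conj_commute)
  also have "\<dots> = (1 - \<alpha>) ^ r * (\<Sum>j=0..r-m. real (r choose j) * (1 - Fb z) ^ j * Fb z ^ (r - j))"
    by (rule FZ_expand) (use mr in \<open>simp add: r_def g_def\<close>)
  finally show ?thesis by (simp add: F_Z_gm_def r_def g_def)
qed

end



context ordm begin

lemma Fu_mono: "mono Fu"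
proof
  fix s t :: real assume st: "s \<le> t"
  have "pv 0 {(x,y). x \<le> xs \<and> x+y \<le> s} \<le> pv 0 {(x,y). x \<le> xs \<and> x+y \<le> t}"
    by (rule pv_mono[OF n0 s1c]) (use st in auto)
  then have "\<alpha> * Fu s \<le> \<alpha> * Fu t" using pv3[OF n0] by simp
  then show "Fu s \<le> Fu t" using a0 by simp
qed

lemma Fb_mono: "mono Fb"
proof
  fix s t :: real assume st: "s \<le> t"
  have "pv 0 {(x,y). xs < x \<and> x+y \<le> s} \<le> pv 0 {(x,y). xs < x \<and> x+y \<le> t}"
    by (rule pv_mono[OF n0 s1d]) (use st in auto)
  then have "(1 - \<alpha>) * Fb s \<le> (1 - \<alpha>) * Fb t" using pv4[OF n0] by simp
  then show "Fb s \<le> Fb t" using a1 by simp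
qed

lemma Fu_m[measurable]: "Fu \<in> borel_measurable borel" using Fu_mono by (rule borel_measurable_mono)
lemma Fb_m[measurable]: "Fb \<in> borel_measurable borel" using Fb_mono by (rule borel_measurable_mono)

definition "piece S i = {\<omega> \<in> space M. (\<forall>k<n. X k \<omega> \<le> xs \<longleftrightarrow> k \<in> S) \<and>
   (\<forall>k\<in>S. k < i \<longrightarrow> X i \<omega> + Y i \<omega> < X k \<omega> + Y k \<omega>) \<and>
   (\<forall>k\<in>S. i < k \<longrightarrow> X i \<omega> + Y i \<omega> \<le> X k \<omega> + Y k \<omega>) \<and>
   m \<le> card {j \<in> {..<n} - S. X j \<omega> + Y j \<omega> < X i \<omega> + Y i \<omega>}}"

definition "Qf S z = (\<alpha> * (1 - Fu z)) ^ (card S - 1) * ((1 - \<alpha>) ^ (n - card S) * F_Z_gm n m (card S) fX FY \<alpha> xs z)"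

lemma card_sum: "finite A \<Longrightarrow> real (card {j \<in> A. P j}) = (\<Sum>j\<in>A. if P j then 1 else 0)"
  using sum.inter_filter[of A "\<lambda>_. 1::real" P] by simp

lemma probpiece: assumes S: "S \<subseteq> {..<n}" "i \<in> S" and mr: "m \<le> n - card S"
  shows "piece S i \<in> events \<and> prob (piece S i) = (\<integral>z. Qf S z * (\<alpha> * fu z) \<partial>lborel)"
proof -
  have i: "i < n" using S by auto
  define rest where "rest = {..<n} - {i}"
  define R where "R = {..<n} - S"
  have fR: "finite R" and frest: "finite rest" by (auto simp: R_def rest_def)
  have Rrest: "R \<subseteq> rest" using S by (auto simp: R_def rest_def)
  define PW where "PW = Pi\<^sub>M rest (\<lambda>_. MP)"
  define W where "W = (\<lambda>\<omega>. restrict (\<lambda>k. V k \<omega>) rest)"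
  have ind1: "indep_var (Pi\<^sub>M {i} (\<lambda>_. MP)) (\<lambda>\<omega>. restrict (\<lambda>k. V k \<omega>) {i}) PW W"
    unfolding PW_def W_def by (rule indep_var_restrict[OF indepV]) (use i in \<open>auto simp: rest_def\<close>)
  define U where "U = (\<lambda>\<omega>. restrict (\<lambda>k. V k \<omega>) {i})"
  define PU where "PU = Pi\<^sub>M {i} (\<lambda>_. MP)"
  have ind: "indep_var PU U PW W" using ind1 by (simp add: U_def PU_def)
  have Wm[measurable]: "W \<in> measurable M PW" using indep_var_rv2[OF ind] .
  have Um[measurable]: "U \<in> measurable M PU" using indep_var_rv1[OF ind] .
  define S1 where "S1 = {k\<in>S. k < i}"
  define S2 where "S2 = {k\<in>S. i < k}"
  have S12: "S1 \<subseteq> rest" "S2 \<subseteq> rest" using S by (auto simp: S1_def S2_def rest_def)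
  have [measurable]: "Measurable.pred (PU \<Otimes>\<^sub>M PW) (\<lambda>p. fst (fst p i) \<le> xs)"
    unfolding PW_def PU_def by (measurable; use S12 Rrest in auto)
  have [measurable]: "Measurable.pred (PU \<Otimes>\<^sub>M PW) (\<lambda>p. \<forall>k\<in>S1. fst (snd p k) \<le> xs \<and> fst (fst p i) + snd (fst p i) < fst (snd p k) + snd (snd p k))"
    unfolding PW_def PU_def by (measurable; use S12 Rrest in auto)
  have [measurable]: "Measurable.pred (PU \<Otimes>\<^sub>M PW) (\<lambda>p. \<forall>k\<in>S2. fst (snd p k) \<le> xs \<and> \<not> fst (snd p k) + snd (snd p k) < fst (fst p i) + snd (fst p i))"
    unfolding PW_def PU_def by (measurable; use S12 Rrest in auto)
  have [measurable]: "Measurable.pred (PU \<Otimes>\<^sub>M PW) (\<lambda>p. \<forall>k\<in>R. xs < fst (snd p k))"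
    unfolding PW_def PU_def by (measurable; use S12 Rrest in auto)
  have [measurable]: "(\<lambda>p. (\<Sum>j\<in>R. if fst (snd p j) + snd (snd p j) < fst (fst p i) + snd (fst p i) then 1 else 0::real)) \<in> borel_measurable (PU \<Otimes>\<^sub>M PW)"
    unfolding PW_def PU_def by (measurable; use S12 Rrest in auto)
  define G where "G = {p \<in> space (PU \<Otimes>\<^sub>M PW). fst (fst p i) \<le> xs \<and>
      (\<forall>k\<in>S1. fst (snd p k) \<le> xs \<and> fst (fst p i) + snd (fst p i) < fst (snd p k) + snd (snd p k)) \<and>
      (\<forall>k\<in>S2. fst (snd p k) \<le> xs \<and> \<not> fst (snd p k) + snd (snd p k) < fst (fst p i) + snd (fst p i)) \<and>
      (\<forall>k\<in>R. xs < fst (snd p k)) \<and>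
      real m \<le> (\<Sum>j\<in>R. if fst (snd p j) + snd (snd p j) < fst (fst p i) + snd (fst p i) then 1 else 0)}"
  have Gm[measurable]: "G \<in> sets (PU \<Otimes>\<^sub>M PW)"
    unfolding G_def by measurable
  have Qeq: "\<And>z. Qf S z = prob (Ev S i z)" using probEv[OF S mr] by (simp add: Qf_def)
  have Qm[measurable]: "Qf S \<in> borel_measurable borel"
    unfolding Qf_def F_Z_gm_def by measurable
  have Q0: "\<And>z. 0 \<le> Qf S z" and Q1: "\<And>z. Qf S z \<le> 1" by (auto simp: Qeq)
  have Ui: "\<And>\<omega>. U \<omega> i = V i \<omega>" by (simp add: U_def)
  have Wk: "\<And>\<omega> k. k \<in> rest \<Longrightarrow> W \<omega> k = V k \<omega>" by (simp add: W_def)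
  have nS: "{..<n} = insert i (S1 \<union> S2 \<union> R)" using S by (auto simp: S1_def S2_def R_def)
  have Rn: "{..<n} - S = R" by (simp add: R_def)
  have piece_eq: "piece S i = (\<lambda>\<omega>. (U \<omega>, W \<omega>)) -` G \<inter> space M"
  proof (intro equalityI subsetI)
    fix \<omega> assume w: "\<omega> \<in> piece S i"
    then have sp: "\<omega> \<in> space M" by (simp add: piece_def)
    have "(U \<omega>, W \<omega>) \<in> space (PU \<Otimes>\<^sub>M PW)"
      using sp measurable_space[OF Um] measurable_space[OF Wm] by (simp add: space_pair_measure)
    moreover have "real m \<le> (\<Sum>j\<in>R. if fst (W \<omega> j) + snd (W \<omega> j) < fst (U \<omega> i) + snd (U \<omega> i) then 1 else 0)"
    proof -
      have "(\<Sum>j\<in>R. if fst (W \<omega> j) + snd (W \<omega> j) < fst (U \<omega> i) + snd (U \<omega> i) then 1 else 0::real)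
          = real (card {j \<in> R. X j \<omega> + Y j \<omega> < X i \<omega> + Y i \<omega>})"
        using Rrest by (subst card_sum[OF fR]) (auto intro!: sum.cong simp: Ui Wk V_def)
      then show ?thesis using w by (simp add: piece_def Rn)
    qed
    moreover have "\<forall>k\<in>S1. fst (W \<omega> k) \<le> xs \<and> fst (U \<omega> i) + snd (U \<omega> i) < fst (W \<omega> k) + snd (W \<omega> k)"
      using w S12 S by (auto simp: piece_def Ui Wk V_def S1_def subset_iff)
    moreover have "\<forall>k\<in>S2. fst (W \<omega> k) \<le> xs \<and> \<not> fst (W \<omega> k) + snd (W \<omega> k) < fst (U \<omega> i) + snd (U \<omega> i)"
      using w S12 S by (auto simp: piece_def Ui Wk V_def S2_def subset_iff not_less)
    moreover have "\<forall>k\<in>R. xs < fst (W \<omega> k)"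
      using w Rrest by (auto simp: piece_def Wk V_def R_def subset_iff not_le)
    moreover have "fst (U \<omega> i) \<le> xs" using w S by (auto simp: piece_def Ui V_def)
    ultimately show "\<omega> \<in> (\<lambda>\<omega>. (U \<omega>, W \<omega>)) -` G \<inter> space M" using sp by (simp add: G_def)
  next
    fix \<omega> assume w: "\<omega> \<in> (\<lambda>\<omega>. (U \<omega>, W \<omega>)) -` G \<inter> space M"
    then have sp: "\<omega> \<in> space M" by simp
    have g: "fst (U \<omega> i) \<le> xs"
      "\<forall>k\<in>S1. fst (W \<omega> k) \<le> xs \<and> fst (U \<omega> i) + snd (U \<omega> i) < fst (W \<omega> k) + snd (W \<omega> k)"
      "\<forall>k\<in>S2. fst (W \<omega> k) \<le> xs \<and> \<not> fst (W \<omega> k) + snd (W \<omega> k) < fst (U \<omega> i) + snd (U \<omega> i)"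
      "\<forall>k\<in>R. xs < fst (W \<omega> k)"
      "real m \<le> (\<Sum>j\<in>R. if fst (W \<omega> j) + snd (W \<omega> j) < fst (U \<omega> i) + snd (U \<omega> i) then 1 else 0)"
      using w by (auto simp: G_def)
    have c: "(\<Sum>j\<in>R. if fst (W \<omega> j) + snd (W \<omega> j) < fst (U \<omega> i) + snd (U \<omega> i) then 1 else 0::real)
          = real (card {j \<in> R. X j \<omega> + Y j \<omega> < X i \<omega> + Y i \<omega>})"
      using Rrest by (subst card_sum[OF fR]) (auto intro!: sum.cong simp: Ui Wk V_def)
    have x1: "\<forall>k<n. X k \<omega> \<le> xs \<longleftrightarrow> k \<in> S"
    proof (intro allI impI)
      fix k assume k: "k < n"
      then have "k \<in> insert i (S1 \<union> S2 \<union> R)" using nS by blast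
      then show "X k \<omega> \<le> xs \<longleftrightarrow> k \<in> S"
        using g S12 Rrest S k by (auto simp: Ui Wk V_def S1_def S2_def R_def subset_iff Ball_def; force)
    qed
    have x2: "\<forall>k\<in>S. k < i \<longrightarrow> X i \<omega> + Y i \<omega> < X k \<omega> + Y k \<omega>"
      using g S12 by (auto simp: Ui Wk V_def S1_def subset_iff)
    have x3: "\<forall>k\<in>S. i < k \<longrightarrow> X i \<omega> + Y i \<omega> \<le> X k \<omega> + Y k \<omega>"
      using g S12 by (auto simp: Ui Wk V_def S2_def subset_iff not_less)
    show "\<omega> \<in> piece S i" using sp x1 x2 x3 g(5) c by (simp add: piece_def Rn)
  qed
  have restS: "{..<n} - {i} = S1 \<union> S2 \<union> R" using S by (auto simp: S1_def S2_def R_def)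
  have Gsec: "(f, W \<omega>) \<in> G \<longleftrightarrow> fst (f i) \<le> xs \<and> \<omega> \<in> Ev S i (fst (f i) + snd (f i))"
    if f: "f \<in> space PU" and w: "\<omega> \<in> space M" for f \<omega>
  proof -
    define z where "z = fst (f i) + snd (f i)"
    have sp: "(f, W \<omega>) \<in> space (PU \<Otimes>\<^sub>M PW)"
      using f w measurable_space[OF Wm] by (simp add: space_pair_measure)
    have c: "(\<Sum>j\<in>R. if fst (W \<omega> j) + snd (W \<omega> j) < z then 1 else 0::real)
          = real (card {j \<in> R. X j \<omega> + Y j \<omega> < z})"
      using Rrest by (subst card_sum[OF fR]) (auto intro!: sum.cong simp: Wk V_def)
    have "(\<forall>k\<in>{..<n} - {i}. (k \<in> S \<and> k < i \<longrightarrow> V k \<omega> \<in> SG z) \<and>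
        (k \<in> S \<and> i < k \<longrightarrow> V k \<omega> \<in> WG z) \<and> (k \<notin> S \<longrightarrow> xs < X k \<omega>)) \<longleftrightarrow>
        (\<forall>k\<in>S1. fst (W \<omega> k) \<le> xs \<and> z < fst (W \<omega> k) + snd (W \<omega> k)) \<and>
        (\<forall>k\<in>S2. fst (W \<omega> k) \<le> xs \<and> \<not> fst (W \<omega> k) + snd (W \<omega> k) < z) \<and>
        (\<forall>k\<in>R. xs < fst (W \<omega> k))"
      unfolding restS using S12 Rrest
      by (auto simp: Wk V_def SG_def WG_def S1_def S2_def R_def subset_iff not_less Ball_def)
    then show ?thesis using sp w c
      by (simp add: G_def Ev_def Rn z_def)
  qed
  interpret DW: prob_space "distr M PW W" by (rule prob_space_distr) simp
  have joint: "distr M (PU \<Otimes>\<^sub>M PW) (\<lambda>\<omega>. (U \<omega>, W \<omega>)) = distr M PU U \<Otimes>\<^sub>M distr M PW W"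
    using ind indep_var_distribution_eq[of PU U PW W] by simp
  define h where "h = (\<lambda>u::real\<times>real. indicator {(x,y). x \<le> xs} u * ennreal (Qf S (fst u + snd u)))"
  have hm[measurable]: "h \<in> borel_measurable MP" unfolding h_def
    by measurable
  have hU: "(\<lambda>f. h (f i)) \<in> borel_measurable PU" unfolding PU_def by measurable
  have "emeasure M (piece S i) = emeasure (distr M (PU \<Otimes>\<^sub>M PW) (\<lambda>\<omega>. (U \<omega>, W \<omega>))) G"
    unfolding piece_eq by (rule emeasure_distr[symmetric]) simp_all
  also have "\<dots> = emeasure (distr M PU U \<Otimes>\<^sub>M distr M PW W) G" unfolding joint ..
  also have "\<dots> = (\<integral>\<^sup>+f. emeasure (distr M PW W) (Pair f -` G) \<partial>distr M PU U)"
    by (rule DW.emeasure_pair_measure_alt) simp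
  also have "\<dots> = (\<integral>\<^sup>+f. h (f i) \<partial>distr M PU U)"
  proof (rule nn_integral_cong)
    fix f assume f: "f \<in> space (distr M PU U)"
    then have f': "f \<in> space PU" by simp
    have "emeasure (distr M PW W) (Pair f -` G) = emeasure M (W -` (Pair f -` G) \<inter> space M)"
      by (rule emeasure_distr) simp_all
    also have "W -` (Pair f -` G) \<inter> space M = (if fst (f i) \<le> xs then Ev S i (fst (f i) + snd (f i)) else {})"
      using Gsec[OF f'] by (auto simp: Ev_def)
    also have "emeasure M \<dots> = h (f i)"
      by (cases "f i") (simp add: h_def Qeq emeasure_eq_measure indicator_def)
    finally show "emeasure (distr M PW W) (Pair f -` G) = h (f i)" .
  qed
  also have "\<dots> = (\<integral>\<^sup>+\<omega>. h (U \<omega> i) \<partial>M)"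
    by (rule nn_integral_distr[OF Um]) (simp add: hU)
  also have "\<dots> = (\<integral>\<^sup>+\<omega>. h (V i \<omega>) \<partial>M)" by (simp add: Ui)
  also have "\<dots> = (\<integral>\<^sup>+u. h u \<partial>distr M MP (V i))"
    by (rule nn_integral_distr[symmetric]) (simp_all add: Vm[OF i])
  also have "\<dots> = ennreal (\<integral>z. Qf S z * (\<alpha> * fu z) \<partial>lborel)"
    unfolding h_def by (rule conv_int[OF i Qm Q0 Q1])
  finally have e: "emeasure M (piece S i) = ennreal (\<integral>z. Qf S z * (\<alpha> * fu z) \<partial>lborel)" .
  have "AE z in lborel. 0 \<le> \<alpha> * fu z"
    unfolding alpha_fu by (auto intro!: integral_nonneg_AE simp: fX0 fY0)
  then have "0 \<le> (\<integral>z. Qf S z * (\<alpha> * fu z) \<partial>lborel)"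
    by (intro integral_nonneg_AE) (auto simp: Q0 elim!: eventually_mono)
  moreover have "piece S i \<in> events" unfolding piece_eq
    by (rule measurable_sets[OF _ Gm]) simp
  ultimately show ?thesis using e by (simp add: meas_of)
qed

end



context ordm begin

definition "allbad = {\<omega> \<in> space M. \<forall>k<n. xs < X k \<omega>}"

lemma s1b': "{(x,y::real). xs < x} \<in> sets (borel \<Otimes>\<^sub>M borel)" using s1b by simp

lemma prob_allbad: "allbad \<in> events \<and> prob allbad = (1 - \<alpha>) ^ n"
proof -
  have e: "allbad = (\<Inter>k\<in>{..<n}. V k -` {(x,y). xs < x} \<inter> space M)"
    using n0 by (auto simp: allbad_def V_def)
  have "prob (\<Inter>k\<in>{..<n}. V k -` {(x,y). xs < x} \<inter> space M) = (\<Prod>k\<in>{..<n}. pv k {(x,y). xs < x})"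
    unfolding pv_def by (rule indep_varsD_finite[OF indepV]) (use n0 s1b' in auto)
  also have "\<dots> = (\<Prod>k\<in>{..<n}. 1 - \<alpha>)" by (intro prod.cong) (auto simp: pv2)
  finally have "prob allbad = (1 - \<alpha>) ^ n" using e by simp
  moreover have "\<And>k. k < n \<Longrightarrow> V k -` {(x,y). xs < x} \<inter> space M \<in> events"
    by (rule measurable_sets[OF Vm s1b])
  then have "allbad \<in> events" unfolding e using n0
    by (intro sets.finite_INT) auto
  ultimately show ?thesis by simp
qed

lemma piece_empty: assumes S: "S \<subseteq> {..<n}" and c: "n - m < card S" shows "piece S i = {}"
proof -
  have cR: "card ({..<n} - S) = n - card S" using S by (simp add: card_Diff_subset finite_subset)
  have lt: "n - card S < m" using c mn m1 by presburger
  have "card {j \<in> {..<n} - S. X j \<omega> + Y j \<omega> < X i \<omega> + Y i \<omega>} < m" for \<omega>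
  proof -
    have "card {j \<in> {..<n} - S. X j \<omega> + Y j \<omega> < X i \<omega> + Y i \<omega>} \<le> card ({..<n} - S)"
      by (intro card_mono) auto
    then show ?thesis using cR lt by linarith
  qed
  then show ?thesis unfolding piece_def using not_le by blast
qed

definition "Tg g = (if 1 \<le> g \<and> g \<le> n - m then \<alpha> ^ g * (1 - \<alpha>) ^ (n - g) *
     (\<integral>z. F_Z_gm n m g fX FY \<alpha> xs z * f_Z1_g g fX fY FY \<alpha> xs z \<partial>lborel) else 0)"

lemma piece_ev: "S \<subseteq> {..<n} \<Longrightarrow> i \<in> S \<Longrightarrow> piece S i \<in> events"
proof -
  assume S: "S \<subseteq> {..<n}" "i \<in> S"
  show ?thesis
  proof (cases "card S \<le> n - m")
    case True then have "m \<le> n - card S" using mn by linarith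
    then show ?thesis using probpiece[OF S] by blast
  qed (use piece_empty[OF S(1)] in auto)
qed

lemma sum_pieces: assumes S: "S \<subseteq> {..<n}"
  shows "(\<Sum>i\<in>S. prob (piece S i)) = Tg (card S)"
proof (cases "S = {}")
  case True then show ?thesis by (simp add: Tg_def)
next
  case ne: False
  have fS: "finite S" using S finite_subset by auto
  then have g1: "1 \<le> card S" using ne by (simp add: Suc_le_eq card_gt_0_iff)
  show ?thesis
  proof (cases "card S \<le> n - m")
    case False then show ?thesis using piece_empty[OF S] by (simp add: Tg_def)
  next
    case True
    define g where "g = card S"
    have mr: "m \<le> n - card S" using True mn by linarith
    have "(\<Sum>i\<in>S. prob (piece S i)) = (\<Sum>i\<in>S. \<integral>z. Qf S z * (\<alpha> * fu z) \<partial>lborel)"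
      using probpiece[OF S _ mr] by (intro sum.cong) auto
    also have "\<dots> = real g * (\<integral>z. Qf S z * (\<alpha> * fu z) \<partial>lborel)" by (simp add: g_def)
    also have "(\<integral>z. Qf S z * (\<alpha> * fu z) \<partial>lborel) = (\<integral>z. (\<alpha> ^ g * (1 - \<alpha>) ^ (n - g)) *
        (F_Z_gm n m g fX FY \<alpha> xs z * ((1 - Fu z) ^ (g - 1) * fu z)) \<partial>lborel)"
    proof (intro Bochner_Integration.integral_cong refl)
      fix z
      have "\<alpha> ^ g = \<alpha> ^ (g - 1) * \<alpha>" using g1 by (simp add: g_def power_eq_if)
      then show "Qf S z * (\<alpha> * fu z) = (\<alpha> ^ g * (1 - \<alpha>) ^ (n - g)) * (F_Z_gm n m g fX FY \<alpha> xs z * ((1 - Fu z) ^ (g - 1) * fu z))"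
        by (simp add: Qf_def g_def power_mult_distrib)
    qed
    also have "\<dots> = (\<alpha> ^ g * (1 - \<alpha>) ^ (n - g)) * (\<integral>z. F_Z_gm n m g fX FY \<alpha> xs z * ((1 - Fu z) ^ (g - 1) * fu z) \<partial>lborel)"
      by simp
    finally have "(\<Sum>i\<in>S. prob (piece S i)) = \<alpha> ^ g * (1 - \<alpha>) ^ (n - g) * (real g * (\<integral>z. F_Z_gm n m g fX FY \<alpha> xs z * ((1 - Fu z) ^ (g - 1) * fu z) \<partial>lborel))"
      by simp
    also have "real g * (\<integral>z. F_Z_gm n m g fX FY \<alpha> xs z * ((1 - Fu z) ^ (g - 1) * fu z) \<partial>lborel)
       = (\<integral>z. F_Z_gm n m g fX FY \<alpha> xs z * f_Z1_g g fX fY FY \<alpha> xs z \<partial>lborel)"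
      by (simp add: f_Z1_g_def mult_ac)
    finally show ?thesis using True g1 by (simp add: Tg_def g_def)
  qed
qed

end



context ordm begin

definition "fail = {\<omega> \<in> space M. \<not> ord_success n m xs (\<lambda>i. X i \<omega> + Y i \<omega>) (\<lambda>i. X i \<omega>)}"
definition "Iset = Sigma (Pow {..<n}) id"

lemma fail_eq: "fail = allbad \<union> (\<Union>p\<in>Iset. piece (fst p) (snd p))"
proof (intro equalityI subsetI)
  fix \<omega> assume w: "\<omega> \<in> fail"
  then have sp: "\<omega> \<in> space M" and ns: "\<not> ord_success n m xs (\<lambda>i. X i \<omega> + Y i \<omega>) (\<lambda>i. X i \<omega>)"
    by (auto simp: fail_def)
  define Z where "Z = (\<lambda>k. X k \<omega> + Y k \<omega>)"
  define S where "S = {k \<in> {..<n}. X k \<omega> \<le> xs}"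
  show "\<omega> \<in> allbad \<union> (\<Union>p\<in>Iset. piece (fst p) (snd p))"
  proof (cases "S = {}")
    case True
    then have "\<omega> \<in> allbad" using sp by (auto simp: allbad_def S_def not_le)
    then show ?thesis by blast
  next
    case False
    have fS: "finite S" by (simp add: S_def)
    define zm where "zm = Min (Z ` S)"
    have zm: "zm \<in> Z ` S" "\<And>k. k \<in> S \<Longrightarrow> zm \<le> Z k" using fS False by (auto simp: zm_def)
    define i where "i = Min {k \<in> S. Z k = zm}"
    have ne: "{k \<in> S. Z k = zm} \<noteq> {}" using zm(1) by auto
    have fin: "finite {k \<in> S. Z k = zm}" using fS by simp
    have iS: "i \<in> S" and Zi: "Z i = zm" using Min_in[OF fin ne] by (auto simp: i_def)
    have imin: "\<And>k. k \<in> S \<Longrightarrow> Z k = zm \<Longrightarrow> i \<le> k" using Min_le[OF fin] by (auto simp: i_def)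
    have c1: "\<forall>k\<in>S. k < i \<longrightarrow> Z i < Z k"
      using zm(2) imin Zi by (metis le_less not_le)
    have c2: "\<forall>k\<in>S. i < k \<longrightarrow> Z i \<le> Z k" using zm(2) Zi by auto
    have rank: "{j. j < n \<and> Z j < Z i} = {j \<in> {..<n} - S. Z j < Z i}"
      using zm(2) Zi by (auto simp: S_def not_le) (metis not_le)
    have "\<not> (ord_rank n Z i < m \<and> X i \<omega> \<le> xs)" using ns iS unfolding ord_success_def Z_def S_def by blast
    then have "m \<le> ord_rank n Z i" using iS by (auto simp: S_def)
    then have c3: "m \<le> card {j \<in> {..<n} - S. Z j < Z i}" by (simp add: ord_rank_def rank)
    have "\<omega> \<in> piece S i"
      using sp c1 c2 c3 by (simp add: piece_def Z_def S_def)
    moreover have "(S, i) \<in> Iset" using iS by (auto simp: Iset_def S_def)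
    ultimately show ?thesis by force
  qed
next
  fix \<omega> assume w: "\<omega> \<in> allbad \<union> (\<Union>p\<in>Iset. piece (fst p) (snd p))"
  define Z where "Z = (\<lambda>k. X k \<omega> + Y k \<omega>)"
  show "\<omega> \<in> fail"
  proof (cases "\<omega> \<in> allbad")
    case True then show ?thesis by (auto simp: allbad_def fail_def ord_success_def not_le)
  next
    case False
    then obtain S i where SI: "(S, i) \<in> Iset" and p: "\<omega> \<in> piece S i" using w by auto
    have S: "S \<subseteq> {..<n}" "i \<in> S" using SI by (auto simp: Iset_def)
    have sp: "\<omega> \<in> space M" using p by (simp add: piece_def)
    have good: "\<forall>k<n. X k \<omega> \<le> xs \<longleftrightarrow> k \<in> S" and c1: "\<forall>k\<in>S. k < i \<longrightarrow> Z i < Z k"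
      and c2: "\<forall>k\<in>S. i < k \<longrightarrow> Z i \<le> Z k" and c3: "m \<le> card {j \<in> {..<n} - S. Z j < Z i}"
      using p by (auto simp: piece_def Z_def)
    have "\<not> ord_success n m xs Z (\<lambda>i. X i \<omega>)"
    proof
      assume "ord_success n m xs Z (\<lambda>i. X i \<omega>)"
      then obtain j where j: "j < n" "ord_rank n Z j < m" "X j \<omega> \<le> xs" by (auto simp: ord_success_def)
      then have jS: "j \<in> S" using good by auto
      have "Z i \<le> Z j" using c1 c2 jS by (cases "j < i"; cases "i < j") auto
      then have "{l \<in> {..<n} - S. Z l < Z i} \<subseteq> {l. l < n \<and> Z l < Z j}" by auto
      then have "card {l \<in> {..<n} - S. Z l < Z i} \<le> ord_rank n Z j"
        unfolding ord_rank_def by (intro card_mono) auto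
      then show False using c3 j(2) by linarith
    qed
    then show ?thesis using sp by (simp add: fail_def Z_def)
  qed
qed

lemma fail_disj: "disjoint_family_on (\<lambda>p. piece (fst p) (snd p)) Iset"
  unfolding disjoint_family_on_def
proof (intro ballI impI)
  fix p q assume p: "p \<in> Iset" and q: "q \<in> Iset" and pq: "p \<noteq> q"
  obtain S i where pe: "p = (S, i)" by (cases p)
  obtain S' i' where qe: "q = (S', i')" by (cases q)
  show "piece (fst p) (snd p) \<inter> piece (fst q) (snd q) = {}"
  proof (rule ccontr)
    assume "piece (fst p) (snd p) \<inter> piece (fst q) (snd q) \<noteq> {}"
    then obtain \<omega> where w1: "\<omega> \<in> piece S i" and w2: "\<omega> \<in> piece S' i'" using pe qe by auto
    have S: "S \<subseteq> {..<n}" "i \<in> S" "S' \<subseteq> {..<n}" "i' \<in> S'" using p q pe qe by (auto simp: Iset_def)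
    have "S = S'"
    proof -
      have "\<forall>k<n. X k \<omega> \<le> xs \<longleftrightarrow> k \<in> S" "\<forall>k<n. X k \<omega> \<le> xs \<longleftrightarrow> k \<in> S'"
        using w1 w2 by (auto simp: piece_def)
      then show ?thesis using S by blast
    qed
    then have "i \<noteq> i'" using pq pe qe by auto
    moreover have "\<not> i < i'" using w1 w2 S \<open>S = S'\<close> by (force simp: piece_def)
    moreover have "\<not> i' < i" using w1 w2 S \<open>S = S'\<close> by (force simp: piece_def)
    ultimately show False by linarith
  qed
qed

lemma fail_prob: "fail \<in> events \<and> prob fail = (1 - \<alpha>) ^ n + (\<Sum>g=1..n-m. real (n choose g) * Tg g)"
proof -
  have fI: "finite Iset" unfolding Iset_def by (rule finite_SigmaI) (auto intro: finite_subset[where B="{..<n}"])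
  have pe: "(\<lambda>p. piece (fst p) (snd p)) ` Iset \<subseteq> events"
    using piece_ev by (auto simp: Iset_def)
  have U: "(\<Union>p\<in>Iset. piece (fst p) (snd p)) \<in> events" using pe fI by auto
  have d: "allbad \<inter> (\<Union>p\<in>Iset. piece (fst p) (snd p)) = {}"
    by (auto simp: allbad_def piece_def Iset_def not_less) (meson lessThan_iff not_le subsetD)
  have ev: "fail \<in> events" unfolding fail_eq using prob_allbad U by auto
  have "prob fail = prob allbad + prob (\<Union>p\<in>Iset. piece (fst p) (snd p))"
    unfolding fail_eq by (rule finite_measure_Union) (use prob_allbad U d in auto)
  also have "prob (\<Union>p\<in>Iset. piece (fst p) (snd p)) = (\<Sum>p\<in>Iset. prob (piece (fst p) (snd p)))"
    by (rule finite_measure_finite_Union[OF fI pe fail_disj])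
  also have "\<dots> = (\<Sum>S\<in>Pow {..<n}. \<Sum>i\<in>S. prob (piece S i))"
  proof -
    have fP: "\<forall>S\<in>Pow {..<n}. finite (id S)" by (auto intro: finite_subset[where B="{..<n}"])
    show ?thesis unfolding Iset_def using sum.Sigma[OF _ fP, of "\<lambda>S i. prob (piece S i)"]
      by (simp add: case_prod_beta' id_def)
  qed
  also have "\<dots> = (\<Sum>S\<in>Pow {..<n}. Tg (card S))"
    by (intro sum.cong) (auto simp: sum_pieces)
  also have "\<dots> = (\<Sum>S\<in>{T. T \<subseteq> {..<n} \<and> True}. Tg (card S))" by (simp add: Pow_def)
  also have "\<dots> = (\<Sum>k\<in>{k. k \<le> card {..<n} \<and> True}. real (card {..<n} choose k) * Tg k)"
    by (rule sum_subsets_card) simp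
  also have "\<dots> = (\<Sum>g=1..n-m. real (n choose g) * Tg g)"
  proof -
    have "(\<Sum>k\<in>{k. k \<le> n}. real (n choose k) * Tg k) = (\<Sum>g=1..n-m. real (n choose g) * Tg g)"
      by (rule sum.mono_neutral_right) (auto simp: Tg_def)
    then show ?thesis by simp
  qed
  finally show ?thesis using ev prob_allbad by simp
qed

lemma main_locale: "prob {\<omega> \<in> space M. ord_success n m xs (\<lambda>i. X i \<omega> + Y i \<omega>) (\<lambda>i. X i \<omega>)}
   = 1 - (1 - \<alpha>) ^ n - (\<Sum>g=1..n-m. real (n choose g) * \<alpha> ^ g * (1 - \<alpha>) ^ (n - g)
                * (\<integral>z. F_Z_gm n m g fX FY \<alpha> xs z * f_Z1_g g fX fY FY \<alpha> xs z \<partial>lborel))"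
proof -
  have "{\<omega> \<in> space M. ord_success n m xs (\<lambda>i. X i \<omega> + Y i \<omega>) (\<lambda>i. X i \<omega>)} = space M - fail"
    by (auto simp: fail_def)
  then have "prob {\<omega> \<in> space M. ord_success n m xs (\<lambda>i. X i \<omega> + Y i \<omega>) (\<lambda>i. X i \<omega>)} = 1 - prob fail"
    using fail_prob by (simp add: prob_compl)
  also have "(\<Sum>g=1..n-m. real (n choose g) * Tg g) = (\<Sum>g=1..n-m. real (n choose g) * \<alpha> ^ g * (1 - \<alpha>) ^ (n - g)
                * (\<integral>z. F_Z_gm n m g fX FY \<alpha> xs z * f_Z1_g g fX fY FY \<alpha> xs z \<partial>lborel))"
    by (intro sum.cong) (auto simp: Tg_def)
  then have "prob fail = (1 - \<alpha>) ^ n + (\<Sum>g=1..n-m. real (n choose g) * \<alpha> ^ g * (1 - \<alpha>) ^ (n - g)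
                * (\<integral>z. F_Z_gm n m g fX FY \<alpha> xs z * f_Z1_g g fX fY FY \<alpha> xs z \<partial>lborel))"
    using fail_prob by simp
  finally show ?thesis by simp
qed

end


theorem mainTheorem2:
  fixes M :: "'a measure" and X Y :: "nat \<Rightarrow> 'a \<Rightarrow> real"
    and fX fY FY :: "real \<Rightarrow> real" and n m :: nat and \<alpha> xs :: real
  assumes "prob_space M"
    and "1 \<le> m" "m \<le> n"
    and "0 < \<alpha>" "\<alpha> < 1"
    and "prob_space.indep_vars M (\<lambda>_. borel) (case_sum X Y) (Inl ` {..<n} \<union> Inr ` {..<n})"
    and "fX \<in> borel_measurable borel" "\<And>x. 0 \<le> fX x"
    and "fY \<in> borel_measurable borel" "\<And>y. 0 \<le> fY y"
    and "\<And>i. i < n \<Longrightarrow> distributed M lborel (X i) (\<lambda>x. ennreal (fX x))"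
    and "\<And>i. i < n \<Longrightarrow> distributed M lborel (Y i) (\<lambda>y. ennreal (fY y))"
    and "\<And>i z. i < n \<Longrightarrow> FY z = measure M {\<omega> \<in> space M. Y i \<omega> \<le> z}"
    and "\<And>i. i < n \<Longrightarrow> measure M {\<omega> \<in> space M. X i \<omega> \<le> xs} = \<alpha>"
  shows "measure M {\<omega> \<in> space M.
            ord_success n m xs (\<lambda>i. X i \<omega> + Y i \<omega>) (\<lambda>i. X i \<omega>)}
         = 1 - (1 - \<alpha>) ^ n
           - (\<Sum>g=1..n-m. real (n choose g) * \<alpha> ^ g * (1 - \<alpha>) ^ (n - g)
                * (LINT z|lborel. F_Z_gm n m g fX FY \<alpha> xs z * f_Z1_g g fX fY FY \<alpha> xs z))"
proof -
  have "ordm M X Y fX fY FY n m \<alpha> xs"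
    unfolding ordm_def ordm_axioms_def using assms by auto
  then show ?thesis by (rule ordm.main_locale)
qed

end
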